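(* Let $\mathbb{X}\subseteq\mathbb{P}^2$ be a $\Bbbk$-configuration of type $(1,2,\dots,s)$ with $s\ge2$. Then exactly one of the following holds: (i) There are exactly $s+1$ lines containing $s$ points of $\mathbb{X}$, and $\mathbb{X}$ is precisely the set of pairwise intersection points of these $s+1$ lines. (ii) There are exactly $s$ lines containing $s$ points of $\mathbb{X}$; moreover there exist subsets $\mathbb{X}_1,\dots,\mathbb{X}_s$ and lines $\mathbb{L}_1,\dots,\mathbb{L}_s$ defining $\mathbb{X}$ as a $\Bbbk$-configuration of type $(1,\dots,s)$ such that $\mathbb{L}_1,\dots,\mathbb{L}_s$ are exactly these $s$ lines, and for each $i=1,\dots,s$ the set $\mathbb{X}\cap\mathbb{L}_i$ consists of the $s-1$ points $\mathbb{L}_i\cap\mathbb{L}_j$ ($j\ne i$) together with a single point $P_i$ not lying on any $\mathbb{L}_j$ with $j\neq i$. (iii) There are $r$ lines containing $s$ points of $\mathbb{X}$ with $1\le r<s$; moreover there exist subsets $\mathbb{X}_1,\dots,\mathbb{X}_s$ and lines $\mathbb{L}_1,\dots,\mathbb{L}_s$ defining $\mathbb{X}$ as a $\Bbbk$-configuration of type $(1,\dots,s)$ such that none of these $r$ lines passes through the unique point of $\mathbb{X}_1$.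
   Context: $\Bbbk$ is an algebraically closed field. A $\Bbbk$-configuration of type $(d_1,\dots,d_s)$ is a finite set $\mathbb{X}\subseteq\mathbb{P}^2$ for which there exist integers $1\le d_1<\cdots<d_s$, subsets $\mathbb{X}_1,\dots,\mathbb{X}_s$ of $\mathbb{X}$ and distinct lines $\mathbb{L}_1,\dots,\mathbb{L}_s\subseteq\mathbb{P}^2$ such that (1) $\mathbb{X}=\bigcup_{i=1}^s\mathbb{X}_i$; (2) $|\mathbb{X}_i|=d_i$ and $\mathbb{X}_i\subseteq\mathbb{L}_i$ for each $i$; (3) for $1<i\le s$, $\mathbb{L}_i$ contains no point of $\mathbb{X}_j$ for any $j<i$. We say $\mathbb{X}$ is defined by these subsets and lines; such defining data need not be unique. *)

theory Defs
  imports "HOL-Computational_Algebra.Polynomial"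
begin

definition alg_closed :: "'k::field itself \<Rightarrow> bool" where
  "alg_closed _ \<longleftrightarrow> (\<forall>p :: 'k poly. degree p > 0 \<longrightarrow> (\<exists>x. poly p x = 0))"

definition proj_class :: "'k::field \<times> 'k \<times> 'k \<Rightarrow> ('k \<times> 'k \<times> 'k) set" where
  "proj_class v = {(c * fst v, c * fst (snd v), c * snd (snd v)) | c. c \<noteq> 0}"

typedef (overloaded) ('k::field) ppoint = "{proj_class v | v :: 'k \<times> 'k \<times> 'k. v \<noteq> (0, 0, 0)}"
proof -
  have "(1::'k, 0::'k, 0::'k) \<noteq> (0, 0, 0)" by simp
  then show ?thesis by blast
qed

definition on_line :: "'k::field \<times> 'k \<times> 'k \<Rightarrow> 'k ppoint \<Rightarrow> bool" where
  "on_line abc P \<longleftrightarrow> (\<forall>(x, y, z) \<in> Rep_ppoint P.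
      fst abc * x + fst (snd abc) * y + snd (snd abc) * z = 0)"

definition line_of :: "'k::field \<times> 'k \<times> 'k \<Rightarrow> 'k ppoint set" where
  "line_of abc = {P. on_line abc P}"

definition is_line :: "'k::field ppoint set \<Rightarrow> bool" where
  "is_line L \<longleftrightarrow> (\<exists>abc. abc \<noteq> (0, 0, 0) \<and> L = line_of abc)"

definition defines_kconfig ::
  "'k::field ppoint set \<Rightarrow> (nat \<Rightarrow> nat) \<Rightarrow> nat \<Rightarrow> (nat \<Rightarrow> 'k ppoint set) \<Rightarrow> (nat \<Rightarrow> 'k ppoint set) \<Rightarrow> bool"
  where
  "defines_kconfig X d s Xs Ls \<longleftrightarrow>
     finite X \<and> 1 \<le> s \<and> 1 \<le> d 1 \<and> strict_mono_on {1..s} d \<and>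
     X = (\<Union>i\<in>{1..s}. Xs i) \<and>
     (\<forall>i\<in>{1..s}. finite (Xs i) \<and> card (Xs i) = d i \<and> is_line (Ls i) \<and> Xs i \<subseteq> Ls i) \<and>
     inj_on Ls {1..s} \<and>
     (\<forall>i\<in>{1..s}. \<forall>j\<in>{1..s}. j < i \<longrightarrow> Ls i \<inter> Xs j = {})"

definition is_kconfig :: "'k::field ppoint set \<Rightarrow> (nat \<Rightarrow> nat) \<Rightarrow> nat \<Rightarrow> bool" where
  "is_kconfig X d s \<longleftrightarrow> (\<exists>Xs Ls. defines_kconfig X d s Xs Ls)"

end

theory Submission
  imports Defs
begin


definition dot :: "'k::field \<times> 'k \<times> 'k \<Rightarrow> 'k \<times> 'k \<times> 'k \<Rightarrow> 'k" where
  "dot a v = fst a * fst v + fst (snd a) * fst (snd v) + snd (snd a) * snd (snd v)"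
definition smul :: "'k::field \<Rightarrow> 'k \<times> 'k \<times> 'k \<Rightarrow> 'k \<times> 'k \<times> 'k" where
  "smul c v = (c * fst v, c * fst (snd v), c * snd (snd v))"
definition cross :: "'k::field \<times> 'k \<times> 'k \<Rightarrow> 'k \<times> 'k \<times> 'k \<Rightarrow> 'k \<times> 'k \<times> 'k" where
  "cross u a = (fst (snd u) * snd (snd a) - snd (snd u) * fst (snd a),
                snd (snd u) * fst a - fst u * snd (snd a),
                fst u * fst (snd a) - fst (snd u) * fst a)"
definition rep :: "'k::field ppoint \<Rightarrow> 'k \<times> 'k \<times> 'k" where
  "rep P = (SOME v. v \<noteq> (0,0,0) \<and> Rep_ppoint P = proj_class v)"

lemma rep_props: "rep P \<noteq> (0,0,0) \<and> Rep_ppoint P = proj_class (rep P)"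
proof -
  have "Rep_ppoint P \<in> {proj_class v | v :: 'a \<times> 'a \<times> 'a. v \<noteq> (0, 0, 0)}"
    by (rule Rep_ppoint)
  then have "\<exists>v. v \<noteq> (0,0,0) \<and> Rep_ppoint P = proj_class v" by blast
  then show ?thesis unfolding rep_def by (rule someI_ex)
qed

lemma proj_class_smul: "proj_class v = {smul c v | c. c \<noteq> 0}"
  unfolding proj_class_def smul_def by simp

lemma on_line_rep: "on_line abc P \<longleftrightarrow> dot abc (rep P) = 0"
proof -
  obtain a1 a2 a3 where a: "abc = (a1,a2,a3)" by (cases abc) auto
  obtain v1 v2 v3 where v: "rep P = (v1,v2,v3)" by (cases "rep P") auto
  have R: "Rep_ppoint P = {(c*v1, c*v2, c*v3) | c. c \<noteq> 0}"
    using rep_props[of P] v unfolding proj_class_def by simp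
  show ?thesis
  proof
    assume h: "on_line abc P"
    have m: "(v1, v2, v3) \<in> Rep_ppoint P" unfolding R by (rule CollectI, rule exI[of _ 1]) simp
    have "a1 * v1 + a2 * v2 + a3 * v3 = 0"
      using h m unfolding on_line_def a by fastforce
    then show "dot abc (rep P) = 0" unfolding dot_def a v by simp
  next
    assume "dot abc (rep P) = 0"
    then have h: "a1*v1 + a2*v2 + a3*v3 = 0" unfolding dot_def a v by simp
    have "a1 * (c*v1) + a2 * (c*v2) + a3 * (c*v3) = 0" for c
    proof -
      have "a1 * (c*v1) + a2 * (c*v2) + a3 * (c*v3) = c * (a1*v1 + a2*v2 + a3*v3)"
        by (simp add: algebra_simps)
      then show ?thesis using h by simp
    qed
    then show "on_line abc P" unfolding on_line_def R a by auto
  qed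
qed

lemma par:
  assumes "u \<noteq> (0,0,0)" "cross u a = (0,0,0)"
  shows "\<exists>\<alpha>. a = smul \<alpha> u"
proof -
  obtain a1 a2 a3 where a: "a = (a1,a2,a3)" by (cases a) auto
  obtain u1 u2 u3 where u: "u = (u1,u2,u3)" by (cases u) auto
  have e: "u2 * a3 = u3 * a2" "u3 * a1 = u1 * a3" "u1 * a2 = u2 * a1"
    using assms(2) unfolding cross_def a u by auto
  consider "u1 \<noteq> 0" | "u2 \<noteq> 0" | "u3 \<noteq> 0" using assms(1) u by auto
  then show ?thesis
  proof cases
    case 1
    have "a = smul (a1/u1) u" unfolding a u smul_def using 1 e
      by (auto simp: field_simps)
    then show ?thesis by blast
  next
    case 2
    have "a = smul (a2/u2) u" unfolding a u smul_def using 2 e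
      by (auto simp: field_simps)
    then show ?thesis by blast
  next
    case 3
    have "a = smul (a3/u3) u" unfolding a u smul_def using 3 e
      by (auto simp: field_simps)
    then show ?thesis by blast
  qed
qed

lemma ppoint_eq:
  assumes "rep Q = smul c (rep P)" "c \<noteq> 0"
  shows "P = Q"
proof -
  have "proj_class (smul c (rep P)) = proj_class (rep P)"
  proof -
    obtain v1 v2 v3 where v: "rep P = (v1,v2,v3)" by (cases "rep P") auto
    have "{(d*(c*v1), d*(c*v2), d*(c*v3)) | d. d \<noteq> 0} = {(d*v1, d*v2, d*v3) | d. d \<noteq> 0}"
    proof safe
      fix d :: 'a assume "d \<noteq> 0"
      then show "\<exists>e. (d*(c*v1), d*(c*v2), d*(c*v3)) = (e*v1, e*v2, e*v3) \<and> e \<noteq> 0"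
        using assms(2) by (intro exI[of _ "d*c"]) auto
    next
      fix d :: 'a assume "d \<noteq> 0"
      then show "\<exists>e. (d*v1, d*v2, d*v3) = (e*(c*v1), e*(c*v2), e*(c*v3)) \<and> e \<noteq> 0"
        using assms(2) by (intro exI[of _ "d/c"]) auto
    qed
    then show ?thesis unfolding proj_class_def smul_def v by simp
  qed
  then have "Rep_ppoint Q = Rep_ppoint P" using rep_props[of P] rep_props[of Q] assms(1) by simp
  then show ?thesis using Rep_ppoint_inject by blast
qed

lemma line_of_smul: "c \<noteq> 0 \<Longrightarrow> line_of (smul c u) = line_of u"
proof -
  assume c: "c \<noteq> 0"
  have "dot (smul c u) v = c * dot u v" for v
    unfolding dot_def smul_def by (simp add: algebra_simps)
  then show ?thesis unfolding line_of_def on_line_rep using c by auto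
qed

lemma two_points:
  assumes L: "is_line L" and M: "is_line M"
    and "P \<in> L" "Q \<in> L" "P \<in> M" "Q \<in> M" "P \<noteq> Q"
  shows "L = M"
proof -
  obtain a where a: "a \<noteq> (0,0,0)" "L = line_of a" using L unfolding is_line_def by blast
  obtain b where b: "b \<noteq> (0,0,0)" "M = line_of b" using M unfolding is_line_def by blast
  define v where "v = rep P"
  define w where "w = rep Q"
  have d: "dot a v = 0" "dot a w = 0" "dot b v = 0" "dot b w = 0"
    using assms a b unfolding v_def w_def line_of_def on_line_rep by auto
  define u where "u = cross v w"
  have u0: "u \<noteq> (0,0,0)"
  proof
    assume "u = (0,0,0)"
    moreover have "v \<noteq> (0,0,0)" unfolding v_def using rep_props by blast
    ultimately obtain c where c: "w = smul c v" using par unfolding u_def by blast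
    have "c \<noteq> 0"
    proof
      assume "c = 0" then have "w = (0,0,0)" using c unfolding smul_def by simp
      then show False unfolding w_def using rep_props by blast
    qed
    then have "P = Q" using ppoint_eq c unfolding v_def w_def by blast
    then show False using assms by simp
  qed
  have key: "cross u x = (0,0,0)" if "dot x v = 0" "dot x w = 0" for x
  proof -
    obtain x1 x2 x3 where x: "x = (x1,x2,x3)" by (cases x) auto
    obtain v1 v2 v3 where vv: "v = (v1,v2,v3)" by (cases v) auto
    obtain w1 w2 w3 where ww: "w = (w1,w2,w3)" by (cases w) auto
    have h1: "x1*v1 + x2*v2 + x3*v3 = 0" "x1*w1 + x2*w2 + x3*w3 = 0"
      using that unfolding dot_def x vv ww by auto
    have "cross u x = (w1 * (x1*v1 + x2*v2 + x3*v3) - v1 * (x1*w1 + x2*w2 + x3*w3),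
                       w2 * (x1*v1 + x2*v2 + x3*v3) - v2 * (x1*w1 + x2*w2 + x3*w3),
                       w3 * (x1*v1 + x2*v2 + x3*v3) - v3 * (x1*w1 + x2*w2 + x3*w3))"
      unfolding u_def cross_def x vv ww by (simp add: algebra_simps)
    then show ?thesis using h1 by simp
  qed
  obtain \<alpha> where al: "a = smul \<alpha> u" using par[OF u0 key[OF d(1,2)]] by blast
  obtain \<beta> where be: "b = smul \<beta> u" using par[OF u0 key[OF d(3,4)]] by blast
  have "\<alpha> \<noteq> 0" using al a(1) unfolding smul_def by auto
  moreover have "\<beta> \<noteq> 0" using be b(1) unfolding smul_def by auto
  ultimately have "line_of a = line_of u" "line_of b = line_of u"
    using al be line_of_smul[of \<alpha> u] line_of_smul[of \<beta> u] by simp_all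
  then show ?thesis using a(2) b(2) by simp
qed



definition Sset :: "'k::field ppoint set \<Rightarrow> nat \<Rightarrow> 'k ppoint set set" where
  "Sset X s = {L. is_line L \<and> card (X \<inter> L) = s}"

abbreviation cfg where "cfg X s Xs Ls \<equiv> defines_kconfig X (\<lambda>i. i) s Xs Ls"

lemma cfg_basic:
  assumes "cfg X s Xs Ls" "i \<in> {1..s}"
  shows "finite (Xs i)" "card (Xs i) = i" "is_line (Ls i)" "Xs i \<subseteq> Ls i"
  using assms unfolding defines_kconfig_def by auto

lemma cfg_finite: "cfg X s Xs Ls \<Longrightarrow> finite X"
  unfolding defines_kconfig_def by auto

lemma cfg_X: "cfg X s Xs Ls \<Longrightarrow> X = (\<Union>i\<in>{1..s}. Xs i)"
  unfolding defines_kconfig_def by auto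

lemma cfg_avoid: "cfg X s Xs Ls \<Longrightarrow> i \<in> {1..s} \<Longrightarrow> j \<in> {1..s} \<Longrightarrow> j < i \<Longrightarrow> Ls i \<inter> Xs j = {}"
  unfolding defines_kconfig_def by auto

lemma cfg_inj: "cfg X s Xs Ls \<Longrightarrow> inj_on Ls {1..s}"
  unfolding defines_kconfig_def by auto

lemma cfg_s: "cfg X s Xs Ls \<Longrightarrow> 1 \<le> s"
  unfolding defines_kconfig_def by auto

lemma cfg_disj:
  assumes "cfg X s Xs Ls" "i \<in> {1..s}" "j \<in> {1..s}" "i \<noteq> j"
  shows "Xs i \<inter> Xs j = {}"
proof (cases "i < j")
  case True
  then show ?thesis using cfg_avoid[OF assms(1) assms(3) assms(2)] cfg_basic(4)[OF assms(1,3)] by blast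
next
  case False
  then have "j < i" using assms(4) by simp
  then show ?thesis using cfg_avoid[OF assms(1) assms(2) assms(3)] cfg_basic(4)[OF assms(1,2)] by blast
qed

lemma cfg_mem: "cfg X s Xs Ls \<Longrightarrow> x \<in> X \<Longrightarrow> \<exists>j\<in>{1..s}. x \<in> Xs j"
  using cfg_X by blast

lemma cfg_sub: "cfg X s Xs Ls \<Longrightarrow> j \<in> {1..s} \<Longrightarrow> Xs j \<subseteq> X"
  using cfg_X by blast

lemma meet_unique:
  assumes "is_line L1" "is_line L2" "L1 \<noteq> L2" "e \<in> L1" "e \<in> L2" "x \<in> L1" "x \<in> L2"
  shows "x = e"
  using two_points[OF assms(1,2)] assms by blast

lemma card_le1: "finite A \<Longrightarrow> (\<And>x y. x \<in> A \<Longrightarrow> y \<in> A \<Longrightarrow> x = y) \<Longrightarrow> card A \<le> 1"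
  by (auto simp add: card_le_Suc0_iff_eq)

lemma line_meet_le1:
  assumes c: "cfg X s Xs Ls" and L: "is_line L" and j: "j \<in> {1..s}" and ne: "L \<noteq> Ls j"
  shows "card (L \<inter> Xs j) \<le> 1"
proof (rule card_le1)
  show "finite (L \<inter> Xs j)" using cfg_basic(1)[OF c j] by simp
  fix x y assume "x \<in> L \<inter> Xs j" "y \<in> L \<inter> Xs j"
  then show "x = y" using meet_unique[OF L cfg_basic(3)[OF c j] ne] cfg_basic(4)[OF c j] by blast
qed

lemma card_inter_sum:
  assumes c: "cfg X s Xs Ls"
  shows "card (X \<inter> L) = (\<Sum>j\<in>{1..s}. card (L \<inter> Xs j))"
proof -
  have "X \<inter> L = (\<Union>j\<in>{1..s}. L \<inter> Xs j)" using cfg_X[OF c] by blast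
  moreover have "card (\<Union>j\<in>{1..s}. L \<inter> Xs j) = (\<Sum>j\<in>{1..s}. card (L \<inter> Xs j))"
  proof (rule card_UN_disjoint)
    show "finite {1..s}" by simp
    show "\<forall>j\<in>{1..s}. finite (L \<inter> Xs j)" using cfg_basic(1)[OF c] by simp
    show "\<forall>i\<in>{1..s}. \<forall>j\<in>{1..s}. i \<noteq> j \<longrightarrow> L \<inter> Xs i \<inter> (L \<inter> Xs j) = {}"
    proof (intro ballI impI)
      fix i j assume "i \<in> {1..s}" "j \<in> {1..s}" "i \<noteq> j"
      then have "Xs i \<inter> Xs j = {}" using cfg_disj[OF c] by blast
      then show "L \<inter> Xs i \<inter> (L \<inter> Xs j) = {}" by blast
    qed
  qed
  ultimately show ?thesis by simp
qed

lemma HL_own: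
  assumes c: "cfg X s Xs Ls" and i: "i \<in> {1..s}" and S: "Ls i \<in> Sset X s"
    and j: "j \<in> {1..s}" and ij: "i < j"
  shows "card (Ls i \<inter> Xs j) = 1"
proof (rule ccontr)
  assume nj: "card (Ls i \<inter> Xs j) \<noteq> 1"
  define f where "f j' = card (Ls i \<inter> Xs j')" for j'
  define g where "g j' = (if j' = i then i else 0) + (if i < j' then 1 else 0)" for j' :: nat
  have le: "f j' \<le> g j'" if "j' \<in> {1..s}" for j'
  proof -
    consider "j' < i" | "j' = i" | "i < j'" by linarith
    then show ?thesis
    proof cases
      case 1 then show ?thesis using cfg_avoid[OF c i that] unfolding f_def g_def by simp
    next
      case 2 then show ?thesis using cfg_basic[OF c i] unfolding f_def g_def
        by (simp add: Int_absorb1 inf_commute)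
    next
      case 3
      have "Ls i \<noteq> Ls j'" using cfg_inj[OF c] i that 3 unfolding inj_on_def by fastforce
      then show ?thesis using line_meet_le1[OF c cfg_basic(3)[OF c i] that] 3 unfolding f_def g_def by simp
    qed
  qed
  have lt: "f j < g j" using le[OF j] nj ij unfolding f_def g_def by simp
  have "sum f {1..s} < sum g {1..s}"
    by (rule sum_strict_mono_ex1) (use le lt j in auto)
  moreover have "sum f {1..s} = s" using card_inter_sum[OF c, of "Ls i"] S unfolding Sset_def f_def by simp
  moreover have "sum g {1..s} = s"
  proof -
    have "sum g {1..s} = (\<Sum>j'\<in>{1..s}. if j' = i then i else 0) + (\<Sum>j'\<in>{1..s}. if i < j' then 1 else 0)"
      unfolding g_def by (simp add: sum.distrib)
    also have "(\<Sum>j'\<in>{1..s}. if j' = i then i else 0) = i" using i by simp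
    also have "(\<Sum>j'\<in>{1..s}. if i < j' then 1 else 0) = card ({1..s} \<inter> {j'. i < j'})"
      by (simp add: sum.If_cases)
    also have "{1..s} \<inter> {j'. i < j'} = {i<..s}" using i by auto
    finally show ?thesis using i by simp
  qed
  ultimately show False by simp
qed

lemma HL_other:
  assumes c: "cfg X s Xs Ls" and S: "L \<in> Sset X s" and nL: "L \<notin> Ls ` {1..s}"
    and j: "j \<in> {1..s}"
  shows "card (L \<inter> Xs j) = 1"
proof (rule ccontr)
  assume nj: "card (L \<inter> Xs j) \<noteq> 1"
  define f where "f j' = card (L \<inter> Xs j')" for j'
  have Ll: "is_line L" using S unfolding Sset_def by simp
  have le: "f j' \<le> 1" if "j' \<in> {1..s}" for j'
  proof -
    have "L \<noteq> Ls j'" using nL that by blast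
    then show ?thesis using line_meet_le1[OF c Ll that] unfolding f_def by simp
  qed
  have lt: "f j < 1" using le[OF j] nj unfolding f_def by simp
  have "sum f {1..s} < sum (\<lambda>_. 1) {1..s}"
    by (rule sum_strict_mono_ex1) (use le lt j in auto)
  moreover have "sum f {1..s} = s" using card_inter_sum[OF c, of L] S unfolding Sset_def f_def by simp
  ultimately show False by simp
qed

lemma card1_obtain: "card A = 1 \<Longrightarrow> \<exists>d. A = {d}"
  by (simp add: card_1_singleton_iff)

lemma CL:
  assumes c: "cfg X s Xs Ls" and S: "L \<in> Sset X s" and P1: "Xs 1 = {P1}"
  shows "(\<exists>i\<in>{2..s}. L = Ls i) \<or> P1 \<in> L"
proof -
  have s1: "1 \<in> {1..s}" using cfg_s[OF c] by simp
  show ?thesis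
  proof (cases "L \<in> Ls ` {1..s}")
    case True
    then obtain i where i: "i \<in> {1..s}" "L = Ls i" by blast
    show ?thesis
    proof (cases "i = 1")
      case True then show ?thesis using cfg_basic(4)[OF c s1] P1 i by auto
    next
      case False then show ?thesis using i by auto
    qed
  next
    case False
    from HL_other[OF c S False s1] P1 show ?thesis by (auto simp: card_1_singleton_iff)
  qed
qed

lemma common_point_disj:
  assumes c: "cfg X s Xs Ls" and L1: "is_line L1" and L2: "is_line L2" and ne: "L1 \<noteq> L2"
    and e: "e \<in> L1" "e \<in> L2" "e \<in> Xs b" and b: "b \<in> {1..s}" and j: "j \<in> {1..s}" "j \<noteq> b"
  shows "L1 \<inter> L2 \<inter> Xs j = {}"
proof -
  { fix x assume "x \<in> L1" "x \<in> L2" "x \<in> Xs j"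
    then have "x = e" using meet_unique[OF L1 L2 ne e(1,2)] by blast
    then have False using cfg_disj[OF c b j(1)] j(2) e(3) \<open>x \<in> Xs j\<close> by auto }
  then show ?thesis by blast
qed

lemma LO:
  assumes c: "cfg X s Xs Ls" and m: "m \<in> {1..s}" and S: "\<forall>a\<in>{1..<m}. Ls a \<in> Sset X s"
  shows "card (Xs m - (\<Union>a\<in>{1..<m}. Ls a)) = 1"
proof -
  define H where "H = (\<Union>a\<in>{1..<m}. Ls a \<inter> Xs m)"
  have fin: "finite (Xs m)" using cfg_basic(1)[OF c m] .
  have cH: "card H = m - 1"
  proof -
    have "card H = (\<Sum>a\<in>{1..<m}. card (Ls a \<inter> Xs m))"
      unfolding H_def
    proof (rule card_UN_disjoint)
      show "finite {1..<m}" by simp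
      show "\<forall>a\<in>{1..<m}. finite (Ls a \<inter> Xs m)" using fin by simp
      show "\<forall>a\<in>{1..<m}. \<forall>b\<in>{1..<m}. a \<noteq> b \<longrightarrow> Ls a \<inter> Xs m \<inter> (Ls b \<inter> Xs m) = {}"
      proof (intro ballI impI)
        fix a b assume a: "a \<in> {1..<m}" and b: "b \<in> {1..<m}" and ab: "a \<noteq> b"
        have gen: "Ls a' \<inter> Ls b' \<inter> Xs m = {}" if a': "a' \<in> {1..<m}" and b': "b' \<in> {1..<m}" and lt: "a' < b'" for a' b'
        proof -
          have a's: "a' \<in> {1..s}" "b' \<in> {1..s}" using a' b' m by auto
          have "card (Ls a' \<inter> Xs b') = 1" using HL_own[OF c a's(1) S[rule_format, OF a'] a's(2) lt] .
          then obtain e where e: "Ls a' \<inter> Xs b' = {e}" by (auto simp: card_1_singleton_iff)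
          have ne: "Ls a' \<noteq> Ls b'" using cfg_inj[OF c] a's lt unfolding inj_on_def by fastforce
          show ?thesis
            by (rule common_point_disj[OF c cfg_basic(3)[OF c a's(1)] cfg_basic(3)[OF c a's(2)] ne, of e b' m])
               (use e cfg_basic(4)[OF c a's(2)] a's m b' in auto)
        qed
        show "Ls a \<inter> Xs m \<inter> (Ls b \<inter> Xs m) = {}"
        proof (cases "a < b")
          case True then show ?thesis using gen[OF a b] by blast
        next
          case False then have "b < a" using ab by simp
          then show ?thesis using gen[OF b a] by blast
        qed
      qed
    qed
    also have "\<dots> = (\<Sum>a\<in>{1..<m}. 1)"
    proof (rule sum.cong)
      fix a assume a: "a \<in> {1..<m}"
      then have "a \<in> {1..s}" using m by auto
      then show "card (Ls a \<inter> Xs m) = 1" using HL_own[OF c _ S[rule_format, OF a] m] a by auto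
    qed simp
    finally show ?thesis by simp
  qed
  have "Xs m - (\<Union>a\<in>{1..<m}. Ls a) = Xs m - H" unfolding H_def by blast
  moreover have "H \<subseteq> Xs m" unfolding H_def by blast
  ultimately have "card (Xs m - (\<Union>a\<in>{1..<m}. Ls a)) = card (Xs m) - card H"
    using fin by (simp add: card_Diff_subset finite_subset)
  then show ?thesis using cH cfg_basic(2)[OF c m] m by simp
qed

lemma MH:
  assumes c: "cfg X s Xs Ls" and S: "L \<in> Sset X s" and nL: "L \<notin> Ls ` {1..s}"
    and j: "j \<in> {1..s}"
  shows "\<exists>d. L \<inter> Xs j = {d} \<and> (\<forall>a\<in>{1..s}. a \<noteq> j \<longrightarrow> d \<notin> Ls a)"
proof -
  obtain d where d: "L \<inter> Xs j = {d}" using HL_other[OF c S nL j] by (auto simp: card_1_singleton_iff)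
  have Ll: "is_line L" using S unfolding Sset_def by simp
  have "d \<notin> Ls a" if a: "a \<in> {1..s}" "a \<noteq> j" for a
  proof
    assume dL: "d \<in> Ls a"
    obtain e where e: "L \<inter> Xs a = {e}" using HL_other[OF c S nL a(1)] by (auto simp: card_1_singleton_iff)
    have ne: "L \<noteq> Ls a" using nL a by auto
    have "d = e" using meet_unique[OF Ll cfg_basic(3)[OF c a(1)] ne, of e d] e d dL cfg_basic(4)[OF c a(1)] by blast
    then show False using cfg_disj[OF c j a(1)] a(2) d e by auto
  qed
  then show ?thesis using d by blast
qed



lemma greedy:
  assumes fin: "finite X" and s1: "1 \<le> s" and lines: "\<forall>i\<in>{1..s}. is_line (Ls i)"
    and cov: "X \<subseteq> (\<Union>i\<in>{1..s}. Ls i)"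
    and cards: "\<forall>i\<in>{1..s}. card (X \<inter> Ls i - (\<Union>j\<in>{i<..s}. Ls j)) = i"
  shows "cfg X s (\<lambda>i. X \<inter> Ls i - (\<Union>j\<in>{i<..s}. Ls j)) Ls"
proof -
  define Xs where "Xs i = X \<inter> Ls i - (\<Union>j\<in>{i<..s}. Ls j)" for i
  have cover: "X = (\<Union>i\<in>{1..s}. Xs i)"
  proof
    show "(\<Union>i\<in>{1..s}. Xs i) \<subseteq> X" unfolding Xs_def by blast
    show "X \<subseteq> (\<Union>i\<in>{1..s}. Xs i)"
    proof
      fix x assume x: "x \<in> X"
      define J where "J = {i\<in>{1..s}. x \<in> Ls i}"
      have "J \<noteq> {}" using x cov unfolding J_def by blast
      moreover have "finite J" unfolding J_def by simp
      ultimately have M: "Max J \<in> J" "\<forall>j\<in>J. j \<le> Max J" by auto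
      have nx: "x \<notin> Ls j" if j: "j \<in> {Max J<..s}" for j
      proof
        assume "x \<in> Ls j"
        moreover have "1 \<le> j" using M(1) j unfolding J_def by auto
        ultimately have "j \<in> J" using j unfolding J_def by auto
        then show False using M(2) j by auto
      qed
      have "x \<in> Ls (Max J)" using M(1) unfolding J_def by blast
      then have "x \<in> Xs (Max J)"
        unfolding Xs_def using nx x by blast
      then show "x \<in> (\<Union>i\<in>{1..s}. Xs i)" using M(1) unfolding J_def by blast
    qed
  qed
  have inj: "inj_on Ls {1..s}"
  proof (rule inj_onI)
    fix a b assume a: "a \<in> {1..s}" and b: "b \<in> {1..s}" and e: "Ls a = Ls b"
    have gen: False if a': "a' \<in> {1..s}" "b' \<in> {1..s}" "a' < b'" "Ls a' = Ls b'" for a' b'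
    proof -
      have "Xs a' = {}" unfolding Xs_def using a' by auto
      moreover have "card (Xs a') = a'" using cards a'(1) unfolding Xs_def by blast
      ultimately show False using a'(1) by simp
    qed
    show "a = b"
    proof (rule ccontr)
      assume "a \<noteq> b"
      then consider "a < b" | "b < a" by linarith
      then show False using gen a b e by metis
    qed
  qed
  show ?thesis
    unfolding defines_kconfig_def Xs_def[symmetric]
    using fin s1 cover inj lines cards unfolding Xs_def by (auto simp: strict_mono_on_def)
qed

lemma replace:
  assumes c: "cfg X s Xs Ls" and M: "is_line M" and sub: "Xs 1 \<subseteq> M"
  shows "cfg X s Xs (Ls(1 := M))"
proof -
  have s1: "1 \<in> {1..s}" using cfg_s[OF c] by simp
  have ne: "Xs 1 \<noteq> {}" using cfg_basic(2)[OF c s1] by auto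
  have neq: "M \<noteq> Ls i" if "i \<in> {2..s}" for i
  proof
    assume "M = Ls i"
    then have "Ls i \<inter> Xs 1 \<noteq> {}" using sub ne by blast
    then show False using cfg_avoid[OF c _ s1] that by auto
  qed
  have inj: "inj_on (Ls(1 := M)) {1..s}"
  proof (rule inj_onI)
    fix a b assume a: "a \<in> {1..s}" and b: "b \<in> {1..s}" and e: "(Ls(1 := M)) a = (Ls(1 := M)) b"
    show "a = b"
    proof (cases "a = 1")
      case a1: True
      show ?thesis
      proof (rule ccontr)
        assume "a \<noteq> b"
        then have "b \<in> {2..s}" using a1 b by auto
        moreover have "M = Ls b" using e a1 \<open>a \<noteq> b\<close> by simp
        ultimately show False using neq by blast
      qed
    next
      case a1: False
      show ?thesis
      proof (cases "b = 1")
        case b1: True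
        have "a \<in> {2..s}" using a1 a by auto
        moreover have "M = Ls a" using e b1 a1 by simp
        ultimately show ?thesis using neq by blast
      next
        case b1: False
        then have "Ls a = Ls b" using e a1 by simp
        then show ?thesis using cfg_inj[OF c] a b unfolding inj_on_def by blast
      qed
    qed
  qed
  have avoid: "\<forall>i\<in>{1..s}. \<forall>j\<in>{1..s}. j < i \<longrightarrow> (Ls(1 := M)) i \<inter> Xs j = {}"
  proof (intro ballI impI)
    fix i j assume ij: "i \<in> {1..s}" "j \<in> {1..s}" "j < i"
    then have "i \<noteq> 1" by simp
    then show "(Ls(1 := M)) i \<inter> Xs j = {}" using cfg_avoid[OF c ij] by simp
  qed
  have each: "\<forall>i\<in>{1..s}. finite (Xs i) \<and> card (Xs i) = i \<and> is_line ((Ls(1 := M)) i) \<and> Xs i \<subseteq> (Ls(1 := M)) i"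
  proof
    fix i assume i: "i \<in> {1..s}"
    show "finite (Xs i) \<and> card (Xs i) = i \<and> is_line ((Ls(1 := M)) i) \<and> Xs i \<subseteq> (Ls(1 := M)) i"
      using cfg_basic[OF c i] M sub by (cases "i = 1") simp_all
  qed
  have rest: "finite X \<and> 1 \<le> s \<and> 1 \<le> (1::nat) \<and> strict_mono_on {1..s} (\<lambda>i::nat. i) \<and> X = (\<Union>i\<in>{1..s}. Xs i)"
    using c unfolding defines_kconfig_def by blast
  show ?thesis unfolding defines_kconfig_def using rest each inj avoid by blast
qed

lemma reversal:
  assumes c: "cfg X s Xs Ls" and k: "k \<in> {2..s}" and S: "\<forall>m\<in>{1..<k}. Ls m \<in> Sset X s"
  shows "\<exists>Xs'. cfg X s Xs' (\<lambda>i. if i \<le> k then Ls (k+1-i) else Ls i) \<and>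
                Xs' 1 = Xs k - (\<Union>a\<in>{1..<k}. Ls a)"
proof -
  define Ls' where "Ls' = (\<lambda>i. if i \<le> k then Ls (k+1-i) else Ls i)"
  have s1: "1 \<le> s" using cfg_s[OF c] .
  have lines: "\<forall>i\<in>{1..s}. is_line (Ls' i)"
  proof
    fix i assume i: "i \<in> {1..s}"
    show "is_line (Ls' i)"
    proof (cases "i \<le> k")
      case True
      then have "k+1-i \<in> {1..s}" using i k by auto
      then show ?thesis using cfg_basic(3)[OF c] True unfolding Ls'_def by simp
    next
      case False then show ?thesis using cfg_basic(3)[OF c i] unfolding Ls'_def by simp
    qed
  qed
  have cov: "X \<subseteq> (\<Union>i\<in>{1..s}. Ls' i)"
  proof
    fix x assume "x \<in> X"
    then obtain j where j: "j \<in> {1..s}" "x \<in> Xs j" using cfg_mem[OF c] by blast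
    then have xj: "x \<in> Ls j" using cfg_basic(4)[OF c j(1)] by blast
    show "x \<in> (\<Union>i\<in>{1..s}. Ls' i)"
    proof (cases "j \<le> k")
      case True
      then have "Ls' (k+1-j) = Ls j" "k+1-j \<in> {1..s}" unfolding Ls'_def using j k by auto
      then show ?thesis using xj by blast
    next
      case False
      then show ?thesis using xj j unfolding Ls'_def by auto
    qed
  qed
  have high: "X \<inter> Ls' i - (\<Union>j\<in>{i<..s}. Ls' j) = Xs i" if i: "i \<in> {1..s}" "k < i" for i
  proof
    show "X \<inter> Ls' i - (\<Union>j\<in>{i<..s}. Ls' j) \<subseteq> Xs i"
    proof
      fix x assume x: "x \<in> X \<inter> Ls' i - (\<Union>j\<in>{i<..s}. Ls' j)"
      then obtain j where j: "j \<in> {1..s}" "x \<in> Xs j" using cfg_mem[OF c] by blast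
      have xi: "x \<in> Ls i" using x i unfolding Ls'_def by auto
      consider "j < i" | "j = i" | "i < j" by linarith
      then show "x \<in> Xs i"
      proof cases
        case 1 then show ?thesis using cfg_avoid[OF c i(1) j(1)] xi j by blast
      next
        case 2 then show ?thesis using j by simp
      next
        case 3
        then have "x \<in> Ls' j" using cfg_basic(4)[OF c j(1)] j i unfolding Ls'_def by auto
        then show ?thesis using x 3 j by auto
      qed
    qed
    show "Xs i \<subseteq> X \<inter> Ls' i - (\<Union>j\<in>{i<..s}. Ls' j)"
    proof
      fix x assume x: "x \<in> Xs i"
      have "x \<in> X" "x \<in> Ls' i" using x cfg_sub[OF c i(1)] cfg_basic(4)[OF c i(1)] i unfolding Ls'_def by auto
      moreover have "x \<notin> Ls' j" if "j \<in> {i<..s}" for j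
        using cfg_avoid[OF c _ i(1), of j] that x i unfolding Ls'_def by auto
      ultimately show "x \<in> X \<inter> Ls' i - (\<Union>j\<in>{i<..s}. Ls' j)" by blast
    qed
  qed
  have upper: "(x \<in> (\<Union>j\<in>{i<..s}. Ls' j)) \<longleftrightarrow> ((\<exists>j\<in>{k<..s}. x \<in> Ls j) \<or> (\<exists>a\<in>{1..<k+1-i}. x \<in> Ls a))"
    if i: "i \<in> {1..s}" "i \<le> k" for i x
  proof
    assume "x \<in> (\<Union>j\<in>{i<..s}. Ls' j)"
    then obtain j where j: "j \<in> {i<..s}" "x \<in> Ls' j" by blast
    show "(\<exists>j\<in>{k<..s}. x \<in> Ls j) \<or> (\<exists>a\<in>{1..<k+1-i}. x \<in> Ls a)"
    proof (cases "j \<le> k")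
      case True
      then have "x \<in> Ls (k+1-j)" "k+1-j \<in> {1..<k+1-i}" using j unfolding Ls'_def by auto
      then show ?thesis by blast
    next
      case False then show ?thesis using j unfolding Ls'_def by auto
    qed
  next
    assume "(\<exists>j\<in>{k<..s}. x \<in> Ls j) \<or> (\<exists>a\<in>{1..<k+1-i}. x \<in> Ls a)"
    then show "x \<in> (\<Union>j\<in>{i<..s}. Ls' j)"
    proof
      assume "\<exists>j\<in>{k<..s}. x \<in> Ls j"
      then obtain j where "j \<in> {k<..s}" "x \<in> Ls j" by blast
      then show ?thesis using i unfolding Ls'_def by (intro UN_I[of j]) auto
    next
      assume "\<exists>a\<in>{1..<k+1-i}. x \<in> Ls a"
      then obtain a where a: "a \<in> {1..<k+1-i}" "x \<in> Ls a" by blast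
      have "k+1-a \<in> {i<..s}" "Ls' (k+1-a) = Ls a" using a i k unfolding Ls'_def by auto
      then show ?thesis using a(2) by (intro UN_I[of "k+1-a"]) auto
    qed
  qed
  define R where "R m = (Xs m - (\<Union>a\<in>{1..<m}. Ls a)) \<union> (\<Union>j\<in>{m<..k}. Ls m \<inter> Xs j)" for m
  have low: "X \<inter> Ls' i - (\<Union>j\<in>{i<..s}. Ls' j) = R (k+1-i)" if i: "i \<in> {1..s}" "i \<le> k" for i
  proof -
    define m where "m = k+1-i"
    have m: "m \<in> {1..s}" "m \<le> k" using i k unfolding m_def by auto
    have Lm: "Ls' i = Ls m" unfolding Ls'_def m_def using i by auto
    have "x \<in> X \<inter> Ls' i - (\<Union>j\<in>{i<..s}. Ls' j) \<longleftrightarrow> x \<in> R m" for x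
    proof
      assume x: "x \<in> X \<inter> Ls' i - (\<Union>j\<in>{i<..s}. Ls' j)"
      then have xm: "x \<in> Ls m" "\<forall>j\<in>{k<..s}. x \<notin> Ls j" "\<forall>a\<in>{1..<m}. x \<notin> Ls a"
        using upper[OF i, of x] Lm unfolding m_def by auto
      obtain j where j: "j \<in> {1..s}" "x \<in> Xs j" using x cfg_mem[OF c] by blast
      consider "j < m" | "j = m" | "m < j \<and> j \<le> k" | "k < j" by linarith
      then show "x \<in> R m"
      proof cases
        case 1 then show ?thesis using cfg_avoid[OF c m(1) j(1)] xm j by blast
      next
        case 2 then show ?thesis using xm j unfolding R_def by blast
      next
        case 3 then show ?thesis using xm j unfolding R_def by auto
      next
        case 4 then show ?thesis using xm j cfg_basic(4)[OF c j(1)] by auto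
      qed
    next
      assume x: "x \<in> R m"
      have notk: "\<forall>j\<in>{k<..s}. x \<notin> Ls j" and nota: "\<forall>a\<in>{1..<m}. x \<notin> Ls a" and inX: "x \<in> X" and inm: "x \<in> Ls m"
      proof -
        have "(x \<in> Xs m \<and> (\<forall>a\<in>{1..<m}. x \<notin> Ls a)) \<or> (\<exists>j\<in>{m<..k}. x \<in> Ls m \<and> x \<in> Xs j)"
          using x unfolding R_def by blast
        then have all: "(\<forall>j\<in>{k<..s}. x \<notin> Ls j) \<and> (\<forall>a\<in>{1..<m}. x \<notin> Ls a) \<and> x \<in> X \<and> x \<in> Ls m"
        proof
          assume h: "x \<in> Xs m \<and> (\<forall>a\<in>{1..<m}. x \<notin> Ls a)"
          have "\<forall>j\<in>{k<..s}. x \<notin> Ls j"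
          proof
            fix j assume j: "j \<in> {k<..s}"
            then have "Ls j \<inter> Xs m = {}" using cfg_avoid[OF c _ m(1), of j] m by auto
            then show "x \<notin> Ls j" using h by blast
          qed
          then show ?thesis using h cfg_sub[OF c m(1)] cfg_basic(4)[OF c m(1)] by blast
        next
          assume "\<exists>j\<in>{m<..k}. x \<in> Ls m \<and> x \<in> Xs j"
          then obtain j where j: "j \<in> {m<..k}" "x \<in> Ls m" "x \<in> Xs j" by blast
          have js: "j \<in> {1..s}" using j k m by auto
          have "\<forall>j'\<in>{k<..s}. x \<notin> Ls j'"
          proof
            fix j' assume j': "j' \<in> {k<..s}"
            then have "Ls j' \<inter> Xs j = {}" using cfg_avoid[OF c _ js, of j'] j by auto
            then show "x \<notin> Ls j'" using j by blast
          qed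
          moreover have "x \<notin> Ls a" if a: "a \<in> {1..<m}" for a
          proof -
            have as: "a \<in> {1..s}" using a m by auto
            have Sa: "Ls a \<in> Sset X s" using S a m by auto
            obtain e where e: "Ls a \<inter> Xs m = {e}"
              using HL_own[OF c as Sa m(1)] a by (auto simp: card_1_singleton_iff)
            have ne: "Ls a \<noteq> Ls m" using cfg_inj[OF c] as m a unfolding inj_on_def by fastforce
            have "Ls a \<inter> Ls m \<inter> Xs j = {}"
              by (rule common_point_disj[OF c cfg_basic(3)[OF c as] cfg_basic(3)[OF c m(1)] ne, of e m j])
                 (use e cfg_basic(4)[OF c m(1)] m js j in auto)
            then show ?thesis using j by blast
          qed
          ultimately show ?thesis using j js cfg_sub[OF c js] by blast
        qed
        show "\<forall>j\<in>{k<..s}. x \<notin> Ls j" using all by blast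
        show "\<forall>a\<in>{1..<m}. x \<notin> Ls a" using all by blast
        show "x \<in> X" using all by blast
        show "x \<in> Ls m" using all by blast
      qed
      then show "x \<in> X \<inter> Ls' i - (\<Union>j\<in>{i<..s}. Ls' j)"
        using upper[OF i, of x] Lm unfolding m_def by auto
    qed
    then show ?thesis unfolding m_def by blast
  qed
  have cardR: "card (R m) = 1 + (k - m)" if m: "m \<in> {1..k}" for m
  proof -
    have ms: "m \<in> {1..s}" using m k by auto
    have c1: "card (Xs m - (\<Union>a\<in>{1..<m}. Ls a)) = 1"
      by (rule LO[OF c ms]) (use S m in auto)
    have fin: "finite (Xs j)" if "j \<in> {m<..k}" for j using cfg_basic(1)[OF c] that k by auto
    have c2: "card (\<Union>j\<in>{m<..k}. Ls m \<inter> Xs j) = k - m"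
    proof -
      have "card (\<Union>j\<in>{m<..k}. Ls m \<inter> Xs j) = (\<Sum>j\<in>{m<..k}. card (Ls m \<inter> Xs j))"
      proof (rule card_UN_disjoint)
        show "finite {m<..k}" by simp
        show "\<forall>j\<in>{m<..k}. finite (Ls m \<inter> Xs j)" using fin by simp
        show "\<forall>i\<in>{m<..k}. \<forall>j\<in>{m<..k}. i \<noteq> j \<longrightarrow> Ls m \<inter> Xs i \<inter> (Ls m \<inter> Xs j) = {}"
        proof (intro ballI impI)
          fix i j assume "i \<in> {m<..k}" "j \<in> {m<..k}" "i \<noteq> j"
          then have "Xs i \<inter> Xs j = {}" using cfg_disj[OF c, of i j] m k by auto
          then show "Ls m \<inter> Xs i \<inter> (Ls m \<inter> Xs j) = {}" by blast
        qed
      qed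
      also have "\<dots> = (\<Sum>j\<in>{m<..k}. 1)"
      proof (rule sum.cong)
        fix j assume j: "j \<in> {m<..k}"
        have "Ls m \<in> Sset X s" using S m j by auto
        then show "card (Ls m \<inter> Xs j) = 1" using HL_own[OF c ms] j k by auto
      qed simp
      finally show ?thesis by simp
    qed
    have disj: "(Xs m - (\<Union>a\<in>{1..<m}. Ls a)) \<inter> (\<Union>j\<in>{m<..k}. Ls m \<inter> Xs j) = {}"
    proof (rule ccontr)
      assume "(Xs m - (\<Union>a\<in>{1..<m}. Ls a)) \<inter> (\<Union>j\<in>{m<..k}. Ls m \<inter> Xs j) \<noteq> {}"
      then obtain x j where x: "x \<in> Xs m" "j \<in> {m<..k}" "x \<in> Xs j" by blast
      have "j \<in> {1..s}" using x(2) k m by auto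
      then have "Xs m \<inter> Xs j = {}" using cfg_disj[OF c ms, of j] x(2) by auto
      then show False using x by blast
    qed
    have f1: "finite (Xs m - (\<Union>a\<in>{1..<m}. Ls a))" using cfg_basic(1)[OF c ms] by simp
    have f2: "finite (\<Union>j\<in>{m<..k}. Ls m \<inter> Xs j)"
      by (rule finite_UN_I) (use fin in simp_all)
    have "card (R m) = card (Xs m - (\<Union>a\<in>{1..<m}. Ls a)) + card (\<Union>j\<in>{m<..k}. Ls m \<inter> Xs j)"
      unfolding R_def by (rule card_Un_disjoint[OF f1 f2 disj])
    then show ?thesis using c1 c2 by simp
  qed
  have cards: "\<forall>i\<in>{1..s}. card (X \<inter> Ls' i - (\<Union>j\<in>{i<..s}. Ls' j)) = i"
  proof
    fix i assume i: "i \<in> {1..s}"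
    show "card (X \<inter> Ls' i - (\<Union>j\<in>{i<..s}. Ls' j)) = i"
    proof (cases "i \<le> k")
      case True
      then have "k+1-i \<in> {1..k}" using i by auto
      then show ?thesis using low[OF i True] cardR[of "k+1-i"] True i by simp
    next
      case False then show ?thesis using high[OF i] cfg_basic(2)[OF c i] by simp
    qed
  qed
  have g: "cfg X s (\<lambda>i. X \<inter> Ls' i - (\<Union>j\<in>{i<..s}. Ls' j)) Ls'"
    by (rule greedy[OF cfg_finite[OF c] s1 lines cov cards])
  have one: "X \<inter> Ls' 1 - (\<Union>j\<in>{1<..s}. Ls' j) = Xs k - (\<Union>a\<in>{1..<k}. Ls a)"
  proof -
    have "X \<inter> Ls' 1 - (\<Union>j\<in>{1<..s}. Ls' j) = R k" using low[of 1] s1 k by auto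
    moreover have "R k = Xs k - (\<Union>a\<in>{1..<k}. Ls a)" unfolding R_def by simp
    ultimately show ?thesis by simp
  qed
  show ?thesis using g one unfolding Ls'_def by blast
qed



lemma meetX:
  assumes c: "cfg X s Xs Ls" and a: "a \<in> {1..s}" and b: "b \<in> {1..s}" and ab: "a < b"
    and S: "Ls a \<in> Sset X s" and Q: "Q \<in> Ls a" "Q \<in> Ls b"
  shows "Q \<in> Xs b"
proof -
  obtain e where e: "Ls a \<inter> Xs b = {e}" using HL_own[OF c a S b ab] by (auto simp: card_1_singleton_iff)
  have ne: "Ls a \<noteq> Ls b" using cfg_inj[OF c] a b ab unfolding inj_on_def by fastforce
  have "Q = e" using meet_unique[OF cfg_basic(3)[OF c a] cfg_basic(3)[OF c b] ne, of e Q] e Q cfg_basic(4)[OF c b] by blast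
  then show ?thesis using e by blast
qed

lemma G:
  assumes c: "cfg X s Xs Ls" and P1: "Xs 1 = {P1}" and S1: "Ls 1 \<in> Sset X s"
    and T: "\<forall>L\<in>Sset X s. P1 \<in> L \<longrightarrow> L = Ls 1"
    and ex: "\<exists>k\<in>{2..s}. Ls k \<notin> Sset X s"
  shows "\<exists>Xs' Ls'. cfg X s Xs' Ls' \<and> (\<forall>L\<in>Sset X s. \<forall>P\<in>Xs' 1. P \<notin> L)"
proof -
  define K where "K = {k\<in>{2..s}. Ls k \<notin> Sset X s}"
  have "K \<noteq> {}" "finite K" using ex unfolding K_def by auto
  then have kK: "Min K \<in> K" and kmin: "\<forall>j\<in>K. Min K \<le> j" by auto
  define k where "k = Min K"
  have k: "k \<in> {2..s}" "Ls k \<notin> Sset X s" using kK unfolding k_def K_def by auto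
  have Sm: "\<forall>m\<in>{1..<k}. Ls m \<in> Sset X s"
  proof
    fix m assume m: "m \<in> {1..<k}"
    show "Ls m \<in> Sset X s"
    proof (cases "m = 1")
      case True then show ?thesis using S1 by simp
    next
      case False
      then have "m \<in> {2..s}" using m k by auto
      moreover have "m \<notin> K" using kmin m unfolding k_def by fastforce
      ultimately show ?thesis unfolding K_def by blast
    qed
  qed
  obtain Xs' where c': "cfg X s Xs' (\<lambda>i. if i \<le> k then Ls (k+1-i) else Ls i)"
    and X1: "Xs' 1 = Xs k - (\<Union>a\<in>{1..<k}. Ls a)"
    using reversal[OF c k(1) Sm] by blast
  have "\<forall>L\<in>Sset X s. \<forall>P\<in>Xs' 1. P \<notin> L"
  proof (intro ballI)
    fix L P assume L: "L \<in> Sset X s" and P: "P \<in> Xs' 1"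
    have Pk: "P \<in> Xs k" and Pa: "\<forall>a\<in>{1..<k}. P \<notin> Ls a" using P X1 by auto
    show "P \<notin> L"
    proof
      assume PL: "P \<in> L"
      from CL[OF c L P1] show False
      proof
        assume "\<exists>i\<in>{2..s}. L = Ls i"
        then obtain i where i: "i \<in> {2..s}" "L = Ls i" by blast
        consider "i < k" | "i = k" | "k < i" by linarith
        then show False
        proof cases
          case 1 then show False using Pa i PL by auto
        next
          case 2 then show False using k L i by simp
        next
          case 3
          have "Ls i \<inter> Xs k = {}" using cfg_avoid[OF c _ _ 3] i k by auto
          then show False using Pk PL i by blast
        qed
      next
        assume "P1 \<in> L"
        then have "L = Ls 1" using T L by blast
        then show False using Pa PL k by auto
      qed
    qed
  qed
  then show ?thesis using c' by blast
qed

lemma notinLs: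
  assumes c: "cfg X s Xs Ls" and P1: "Xs 1 = {P1}" and PL: "P1 \<in> L" and ne: "L \<noteq> Ls 1"
  shows "L \<notin> Ls ` {1..s}"
proof
  assume "L \<in> Ls ` {1..s}"
  then obtain i where i: "i \<in> {1..s}" "L = Ls i" by blast
  have "i \<noteq> 1" using ne i by auto
  then have "Ls i \<inter> Xs 1 = {}" using cfg_avoid[OF c i(1), of 1] i by auto
  then show False using PL P1 i by auto
qed

lemma Tstruct:
  assumes c: "cfg X s Xs Ls" and P1: "Xs 1 = {P1}" and S1: "Ls 1 \<in> Sset X s" and s2: "2 \<le> s"
    and M: "M \<in> Sset X s" "P1 \<in> M" "M \<noteq> Ls 1"
    and L: "L \<in> Sset X s" "P1 \<in> L" "L \<noteq> Ls 1"
  shows "L = M"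
proof -
  have j2: "2 \<in> {1..s}" using s2 by simp
  have j1: "1 \<in> {1..s}" using s2 by simp
  obtain d where d0: "L \<inter> Xs 2 = {d}" "\<forall>a\<in>{1..s}. a \<noteq> 2 \<longrightarrow> d \<notin> Ls a"
    using MH[OF c L(1) notinLs[OF c P1 L(2,3)] j2] by blast
  have d: "L \<inter> Xs 2 = {d}" "d \<notin> Ls 1" using d0 j1 by auto
  obtain d' where d0': "M \<inter> Xs 2 = {d'}" "\<forall>a\<in>{1..s}. a \<noteq> 2 \<longrightarrow> d' \<notin> Ls a"
    using MH[OF c M(1) notinLs[OF c P1 M(2,3)] j2] by blast
  have d': "M \<inter> Xs 2 = {d'}" "d' \<notin> Ls 1" using d0' j1 by auto
  obtain a where a: "Ls 1 \<inter> Xs 2 = {a}"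
    using HL_own[OF c j1 S1 j2] by (auto simp: card_1_singleton_iff)
  have dm: "d \<in> Xs 2 - {a}" using d a by blast
  have dm': "d' \<in> Xs 2 - {a}" using d' a by blast
  have "a \<in> Xs 2" using a by blast
  then have "card (Xs 2 - {a}) = 1" using cfg_basic(1,2)[OF c j2] by simp
  then obtain z where zz: "Xs 2 - {a} = {z}" by (auto simp: card_1_singleton_iff)
  have "d \<in> {z}" using dm unfolding zz .
  moreover have "d' \<in> {z}" using dm' unfolding zz .
  ultimately have "d = d'" by simp
  have dP: "P1 \<noteq> d"
  proof
    assume "P1 = d"
    moreover have "P1 \<in> Xs 1" using P1 by simp
    moreover have "d \<in> Xs 2" using d(1) by blast
    moreover have "Xs 1 \<inter> Xs 2 = {}" using cfg_disj[OF c j1 j2] by simp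
    ultimately show False by blast
  qed
  have lL: "is_line L" and lM: "is_line M" using L M unfolding Sset_def by auto
  have dL: "d \<in> L" and dM: "d \<in> M" using d d' \<open>d = d'\<close> by auto
  show ?thesis by (rule two_points[OF lL lM L(2) dL M(2) dM dP])
qed

lemma Ls_s_in_S:
  assumes c: "cfg X s Xs Ls"
  shows "Ls s \<in> Sset X s"
proof -
  have s: "s \<in> {1..s}" using cfg_s[OF c] by simp
  have "X \<inter> Ls s = Xs s"
  proof
    show "X \<inter> Ls s \<subseteq> Xs s"
    proof
      fix x assume x: "x \<in> X \<inter> Ls s"
      then obtain j where j: "j \<in> {1..s}" "x \<in> Xs j" using cfg_mem[OF c] by blast
      show "x \<in> Xs s"
      proof (cases "j = s")
        case True then show ?thesis using j by simp
      next
        case False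
        then have "Ls s \<inter> Xs j = {}" using cfg_avoid[OF c s j(1)] j by auto
        then show ?thesis using x j by blast
      qed
    qed
    show "Xs s \<subseteq> X \<inter> Ls s" using cfg_sub[OF c s] cfg_basic(4)[OF c s] by blast
  qed
  then show ?thesis using cfg_basic[OF c s] unfolding Sset_def by simp
qed

lemma Bstruct:
  assumes c: "cfg X s Xs Ls" and all: "\<forall>i\<in>{1..s}. Ls i \<in> Sset X s" and cS: "card (Sset X s) = s"
  shows "Ls ` {1..s} = Sset X s \<and>
    (\<forall>i\<in>{1..s}. \<exists>P. X \<inter> Ls i = {Q. \<exists>j\<in>{1..s}. j \<noteq> i \<and> Q \<in> Ls i \<inter> Ls j} \<union> {P} \<and>
                     (\<forall>j\<in>{1..s}. j \<noteq> i \<longrightarrow> P \<notin> Ls j))"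
proof
  have s1: "1 \<le> s" using cfg_s[OF c] .
  have finS: "finite (Sset X s)" using cS s1 card_ge_0_finite[of "Sset X s"] by simp
  have "card (Ls ` {1..s}) = s" using card_image[OF cfg_inj[OF c]] by simp
  then show "Ls ` {1..s} = Sset X s"
    using card_subset_eq[OF finS, of "Ls ` {1..s}"] all cS by auto
  show "\<forall>i\<in>{1..s}. \<exists>P. X \<inter> Ls i = {Q. \<exists>j\<in>{1..s}. j \<noteq> i \<and> Q \<in> Ls i \<inter> Ls j} \<union> {P} \<and>
                     (\<forall>j\<in>{1..s}. j \<noteq> i \<longrightarrow> P \<notin> Ls j)"
  proof
    fix i assume i: "i \<in> {1..s}"
    have "card (Xs i - (\<Union>a\<in>{1..<i}. Ls a)) = 1"
      by (rule LO[OF c i]) (use all i in auto)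
    then obtain P where P: "Xs i - (\<Union>a\<in>{1..<i}. Ls a) = {P}" by (auto simp: card_1_singleton_iff)
    have Pi: "P \<in> Xs i" using P by blast
    have Pn: "P \<notin> Ls j" if j: "j \<in> {1..s}" "j \<noteq> i" for j
    proof (cases "j < i")
      case True
      then have "j \<in> {1..<i}" using j by simp
      then show ?thesis using P by blast
    next
      case False
      then have "i < j" using j by simp
      then have "Ls j \<inter> Xs i = {}" using cfg_avoid[OF c j(1) i] by simp
      then show ?thesis using Pi by blast
    qed
    define I where "I = {Q. \<exists>j\<in>{1..s}. j \<noteq> i \<and> Q \<in> Ls i \<inter> Ls j}"
    have "X \<inter> Ls i = I \<union> {P}"
    proof
      show "X \<inter> Ls i \<subseteq> I \<union> {P}"
      proof
        fix x assume x: "x \<in> X \<inter> Ls i"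
        then obtain j where j: "j \<in> {1..s}" "x \<in> Xs j" using cfg_mem[OF c] by blast
        consider "j < i" | "j = i" | "i < j" by linarith
        then show "x \<in> I \<union> {P}"
        proof cases
          case 1 then show ?thesis using cfg_avoid[OF c i j(1)] x j by blast
        next
          case 2
          show ?thesis
          proof (cases "\<exists>a\<in>{1..<i}. x \<in> Ls a")
            case True
            then obtain a where "a \<in> {1..<i}" "x \<in> Ls a" by blast
            then show ?thesis using x i unfolding I_def by auto
          next
            case False then show ?thesis using P j 2 by blast
          qed
        next
          case 3
          then show ?thesis using x j cfg_basic(4)[OF c j(1)] unfolding I_def by auto
        qed
      qed
      show "I \<union> {P} \<subseteq> X \<inter> Ls i"
      proof
        fix Q assume Q: "Q \<in> I \<union> {P}"
        show "Q \<in> X \<inter> Ls i"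
        proof (cases "Q = P")
          case True then show ?thesis using Pi cfg_sub[OF c i] cfg_basic(4)[OF c i] by blast
        next
          case False
          then obtain j where j: "j \<in> {1..s}" "j \<noteq> i" "Q \<in> Ls i" "Q \<in> Ls j" using Q unfolding I_def by blast
          show ?thesis
          proof (cases "i < j")
            case True
            then have "Q \<in> Xs j" using meetX[OF c i j(1) True] all i j by blast
            then show ?thesis using cfg_sub[OF c j(1)] j by blast
          next
            case False
            then have "j < i" using j by simp
            then have "Q \<in> Xs i" using meetX[OF c j(1) i] all i j by blast
            then show ?thesis using cfg_sub[OF c i] j by blast
          qed
        qed
      qed
    qed
    then show "\<exists>P. X \<inter> Ls i = {Q. \<exists>j\<in>{1..s}. j \<noteq> i \<and> Q \<in> Ls i \<inter> Ls j} \<union> {P} \<and>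
                     (\<forall>j\<in>{1..s}. j \<noteq> i \<longrightarrow> P \<notin> Ls j)"
      using Pn unfolding I_def by blast
  qed
qed

lemma Astruct:
  assumes c: "cfg X s Xs Ls" and P1: "Xs 1 = {P1}" and all: "\<forall>i\<in>{1..s}. Ls i \<in> Sset X s"
    and M: "M' \<in> Sset X s" "P1 \<in> M'" "M' \<noteq> Ls 1" and SS: "Sset X s = insert M' (Ls ` {1..s})"
  shows "X = {P. \<exists>L\<in>Sset X s. \<exists>M\<in>Sset X s. L \<noteq> M \<and> P \<in> L \<and> P \<in> M}"
proof
  have nM: "M' \<notin> Ls ` {1..s}" using notinLs[OF c P1 M(2,3)] .
  have Ml: "is_line M'" using M unfolding Sset_def by simp
  have s1: "1 \<in> {1..s}" using cfg_s[OF c] by simp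
  have MLb: "P \<in> X" if b: "b \<in> {1..s}" and P: "P \<in> M'" "P \<in> Ls b" for b P
  proof -
    obtain d where d: "M' \<inter> Xs b = {d}" using MH[OF c M(1) nM b] by blast
    have ne: "M' \<noteq> Ls b" using nM b by blast
    have "P = d" using meet_unique[OF Ml cfg_basic(3)[OF c b] ne, of d P] d P cfg_basic(4)[OF c b] by blast
    then show ?thesis using d cfg_sub[OF c b] by blast
  qed
  show "{P. \<exists>L\<in>Sset X s. \<exists>M\<in>Sset X s. L \<noteq> M \<and> P \<in> L \<and> P \<in> M} \<subseteq> X"
  proof
    fix P assume "P \<in> {P. \<exists>L\<in>Sset X s. \<exists>M\<in>Sset X s. L \<noteq> M \<and> P \<in> L \<and> P \<in> M}"
    then obtain L N where LN: "L \<in> Sset X s" "N \<in> Sset X s" "L \<noteq> N" "P \<in> L" "P \<in> N" by blast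
    show "P \<in> X"
    proof (cases "L = M'")
      case True
      then have "N \<noteq> M'" using LN(3) by simp
      then have "N \<in> Ls ` {1..s}" using LN(2) SS by simp
      then obtain b where "b \<in> {1..s}" "N = Ls b" by blast
      then show ?thesis using MLb LN True by blast
    next
      case LM: False
      then have "L \<in> Ls ` {1..s}" using LN(1) SS by simp
      then obtain a where a: "a \<in> {1..s}" "L = Ls a" by blast
      show ?thesis
      proof (cases "N = M'")
        case True then show ?thesis using MLb a LN by blast
      next
        case False
        then have "N \<in> Ls ` {1..s}" using LN(2) SS by simp
        then obtain b where b: "b \<in> {1..s}" "N = Ls b" by blast
        have "a \<noteq> b" using a b LN by auto
        then consider "a < b" | "b < a" by linarith
        then show ?thesis
        proof cases
          case 1
          then have "P \<in> Xs b" using meetX[OF c a(1) b(1) 1] all a b LN by blast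
          then show ?thesis using cfg_sub[OF c b(1)] by blast
        next
          case 2
          then have "P \<in> Xs a" using meetX[OF c b(1) a(1) 2] all a b LN by blast
          then show ?thesis using cfg_sub[OF c a(1)] by blast
        qed
      qed
    qed
  qed
  show "X \<subseteq> {P. \<exists>L\<in>Sset X s. \<exists>M\<in>Sset X s. L \<noteq> M \<and> P \<in> L \<and> P \<in> M}"
  proof
    fix x assume x: "x \<in> X"
    then obtain j where j: "j \<in> {1..s}" "x \<in> Xs j" using cfg_mem[OF c] by blast
    have xj: "x \<in> Ls j" using j cfg_basic(4)[OF c j(1)] by blast
    have Lj: "Ls j \<in> Sset X s" using all j by blast
    have "\<exists>L\<in>Sset X s. L \<noteq> Ls j \<and> x \<in> L"
    proof (cases "\<exists>a\<in>{1..<j}. x \<in> Ls a")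
      case True
      then obtain a where a: "a \<in> {1..<j}" "x \<in> Ls a" by blast
      have "a \<in> {1..s}" "a \<noteq> j" using a j by auto
      then have "Ls a \<noteq> Ls j" using cfg_inj[OF c] j(1) unfolding inj_on_def by blast
      then show ?thesis using a all j by auto
    next
      case False
      have "card (Xs j - (\<Union>a\<in>{1..<j}. Ls a)) = 1" by (rule LO[OF c j(1)]) (use all j in auto)
      then obtain c0 where c0: "Xs j - (\<Union>a\<in>{1..<j}. Ls a) = {c0}" by (auto simp: card_1_singleton_iff)
      obtain d where d: "M' \<inter> Xs j = {d}" "\<forall>a\<in>{1..s}. a \<noteq> j \<longrightarrow> d \<notin> Ls a"
        using MH[OF c M(1) nM j(1)] by blast
      have "d \<in> Xs j - (\<Union>a\<in>{1..<j}. Ls a)" using d j by auto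
      then have "d \<in> {c0}" unfolding c0 .
      moreover have "x \<in> Xs j - (\<Union>a\<in>{1..<j}. Ls a)" using False j by auto
      then have "x \<in> {c0}" unfolding c0 .
      ultimately have "x = d" by simp
      then have "x \<in> M'" using d by blast
      moreover have "M' \<noteq> Ls j" using nM j by blast
      ultimately show ?thesis using M by blast
    qed
    then show "x \<in> {P. \<exists>L\<in>Sset X s. \<exists>M\<in>Sset X s. L \<noteq> M \<and> P \<in> L \<and> P \<in> M}"
      using Lj xj by blast
  qed
qed



definition Aprop :: "'k::field ppoint set \<Rightarrow> nat \<Rightarrow> bool" where
  "Aprop X s \<longleftrightarrow> (card (Sset X s) = s + 1 \<and> X = {P. \<exists>L\<in>Sset X s. \<exists>M\<in>Sset X s. L \<noteq> M \<and> P \<in> L \<and> P \<in> M})"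

definition Bprop :: "'k::field ppoint set \<Rightarrow> nat \<Rightarrow> bool" where
  "Bprop X s \<longleftrightarrow> (card (Sset X s) = s \<and>
           (\<exists>Xs Ls. defines_kconfig X (\<lambda>i. i) s Xs Ls \<and> Ls ` {1..s} = Sset X s \<and>
              (\<forall>i\<in>{1..s}. \<exists>P. X \<inter> Ls i = {Q. \<exists>j\<in>{1..s}. j \<noteq> i \<and> Q \<in> Ls i \<inter> Ls j} \<union> {P} \<and>
                               (\<forall>j\<in>{1..s}. j \<noteq> i \<longrightarrow> P \<notin> Ls j))))"

definition Cprop :: "'k::field ppoint set \<Rightarrow> nat \<Rightarrow> bool" where
  "Cprop X s \<longleftrightarrow> (\<exists>r. 1 \<le> r \<and> r < s \<and> card (Sset X s) = r \<and>
           (\<exists>Xs Ls. defines_kconfig X (\<lambda>i. i) s Xs Ls \<and> (\<forall>L\<in>Sset X s. \<forall>P\<in>Xs 1. P \<notin> L)))"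

lemma Sdec:
  assumes c: "cfg X s Xs Ls" and P1: "Xs 1 = {P1}"
  shows "Sset X s = {L\<in>Sset X s. P1 \<in> L} \<union> Ls ` {i\<in>{2..s}. Ls i \<in> Sset X s}"
    and "{L\<in>Sset X s. P1 \<in> L} \<inter> Ls ` {i\<in>{2..s}. Ls i \<in> Sset X s} = {}"
    and "card (Ls ` {i\<in>{2..s}. Ls i \<in> Sset X s}) = card {i\<in>{2..s}. Ls i \<in> Sset X s}"
proof -
  show "Sset X s = {L\<in>Sset X s. P1 \<in> L} \<union> Ls ` {i\<in>{2..s}. Ls i \<in> Sset X s}"
  proof
    show "Sset X s \<subseteq> {L\<in>Sset X s. P1 \<in> L} \<union> Ls ` {i\<in>{2..s}. Ls i \<in> Sset X s}"
    proof
      fix L assume L: "L \<in> Sset X s"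
      from CL[OF c L P1] show "L \<in> {L\<in>Sset X s. P1 \<in> L} \<union> Ls ` {i\<in>{2..s}. Ls i \<in> Sset X s}"
      proof
        assume "\<exists>i\<in>{2..s}. L = Ls i"
        then obtain i where "i \<in> {2..s}" "L = Ls i" by blast
        then show ?thesis using L by blast
      next
        assume "P1 \<in> L" then show ?thesis using L by blast
      qed
    qed
    show "{L\<in>Sset X s. P1 \<in> L} \<union> Ls ` {i\<in>{2..s}. Ls i \<in> Sset X s} \<subseteq> Sset X s" by blast
  qed
  show "{L\<in>Sset X s. P1 \<in> L} \<inter> Ls ` {i\<in>{2..s}. Ls i \<in> Sset X s} = {}"
  proof (rule ccontr)
    assume "{L\<in>Sset X s. P1 \<in> L} \<inter> Ls ` {i\<in>{2..s}. Ls i \<in> Sset X s} \<noteq> {}"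
    then obtain i where i: "i \<in> {2..s}" "P1 \<in> Ls i" by blast
    have "Ls i \<inter> Xs 1 = {}" using cfg_avoid[OF c, of i 1] i by auto
    then show False using i P1 by blast
  qed
  have "inj_on Ls {i\<in>{2..s}. Ls i \<in> Sset X s}"
    using cfg_inj[OF c] by (rule inj_on_subset) auto
  then show "card (Ls ` {i\<in>{2..s}. Ls i \<in> Sset X s}) = card {i\<in>{2..s}. Ls i \<in> Sset X s}"
    by (rule card_image)
qed

lemma ApropI: "card (Sset X s) = s + 1 \<Longrightarrow> X = {P. \<exists>L\<in>Sset X s. \<exists>M\<in>Sset X s. L \<noteq> M \<and> P \<in> L \<and> P \<in> M} \<Longrightarrow> Aprop X s"
  unfolding Aprop_def by (rule conjI)

lemma BpropI:
  assumes "card (Sset X s) = s" "cfg X s Xs Ls"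
    "Ls ` {1..s} = Sset X s \<and>
    (\<forall>i\<in>{1..s}. \<exists>P. X \<inter> Ls i = {Q. \<exists>j\<in>{1..s}. j \<noteq> i \<and> Q \<in> Ls i \<inter> Ls j} \<union> {P} \<and>
                     (\<forall>j\<in>{1..s}. j \<noteq> i \<longrightarrow> P \<notin> Ls j))"
  shows "Bprop X s"
  unfolding Bprop_def
  by (rule conjI[OF assms(1)], rule exI[of _ Xs], rule exI[of _ Ls], rule conjI[OF assms(2) assms(3)])

lemma CpropI:
  assumes "cfg X s Xs Ls" "\<forall>L\<in>Sset X s. \<forall>P\<in>Xs 1. P \<notin> L" "1 \<le> card (Sset X s)" "card (Sset X s) < s"
  shows "Cprop X s"
  unfolding Cprop_def
  by (rule exI[of _ "card (Sset X s)"], intro conjI assms(3) assms(4) refl, rule exI[of _ Xs], rule exI[of _ Ls], rule conjI[OF assms(1) assms(2)])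

lemma mainL1:
  assumes c: "cfg X s Xs Ls" and P1: "Xs 1 = {P1}" and S1: "Ls 1 \<in> Sset X s" and s2: "2 \<le> s"
  shows "Aprop X s \<or> Bprop X s \<or> Cprop X s"
proof -
  define S where "S = Sset X s"
  define U where "U = {i\<in>{2..s}. Ls i \<in> S}"
  define W where "W = {2..s} - U"
  have UW: "card U + card W = s - 1"
  proof -
    have "U \<subseteq> {2..s}" unfolding U_def by blast
    then have "card W = card {2..s} - card U" unfolding W_def by (simp add: card_Diff_subset finite_subset)
    moreover have "card U \<le> card {2..s}" using card_mono[OF _ \<open>U \<subseteq> {2..s}\<close>] by simp
    ultimately show ?thesis by simp
  qed
  have finLU: "finite (Ls ` U)" unfolding U_def by simp
  have dec: "S = {L\<in>S. P1 \<in> L} \<union> Ls ` U" and dj: "{L\<in>S. P1 \<in> L} \<inter> Ls ` U = {}"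
    and cLU: "card (Ls ` U) = card U"
    using Sdec[OF c P1] unfolding S_def U_def by auto
  have s1: "1 \<in> {1..s}" "s \<in> {1..s}" using s2 by auto
  have P1L1: "P1 \<in> Ls 1" using cfg_basic(4)[OF c s1(1)] P1 by auto
  have Ss: "Ls s \<in> S" using Ls_s_in_S[OF c] unfolding S_def .
  have U_all: "\<forall>i\<in>{1..s}. Ls i \<in> S" if "W = {}"
  proof
    fix i assume i: "i \<in> {1..s}"
    show "Ls i \<in> S"
    proof (cases "i = 1")
      case True then show ?thesis using S1 unfolding S_def by simp
    next
      case False
      then have "i \<in> {2..s}" using i by auto
      then show ?thesis using that unfolding W_def U_def by blast
    qed
  qed
  show ?thesis
  proof (cases "\<forall>L\<in>S. P1 \<in> L \<longrightarrow> L = Ls 1")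
    case T1: True
    have Tset: "{L\<in>S. P1 \<in> L} = {Ls 1}"
    proof
      show "{L\<in>S. P1 \<in> L} \<subseteq> {Ls 1}" using T1 by blast
      show "{Ls 1} \<subseteq> {L\<in>S. P1 \<in> L}" using S1 P1L1 unfolding S_def by blast
    qed
    have finS: "finite S" using dec Tset finLU by (metis finite.emptyI finite.insertI finite_Un)
    have cS: "card S = 1 + card U"
    proof -
      have "card S = card {L\<in>S. P1 \<in> L} + card (Ls ` U)"
        using card_Un_disjoint[of "{L\<in>S. P1 \<in> L}" "Ls ` U"] dec dj finLU Tset by simp
      then show ?thesis using Tset cLU by simp
    qed
    show ?thesis
    proof (cases "W = {}")
      case True
      then have "card U = s - 1" using UW by simp
      then have cSs: "card (Sset X s) = s" using cS s2 unfolding S_def by simp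
      have all: "\<forall>i\<in>{1..s}. Ls i \<in> Sset X s" using U_all[OF True] unfolding S_def .
      note B = Bstruct[OF c all cSs]
      have "Bprop X s" by (rule BpropI[OF cSs c B])
      then show ?thesis by blast
    next
      case False
      then obtain k where k: "k \<in> W" by blast
      have "\<exists>k\<in>{2..s}. Ls k \<notin> Sset X s" using k unfolding W_def U_def S_def by blast
      then obtain Xs' Ls' where g: "cfg X s Xs' Ls'" "\<forall>L\<in>Sset X s. \<forall>P\<in>Xs' 1. P \<notin> L"
        using G[OF c P1 S1] T1 unfolding S_def by blast
      have "card W \<ge> 1" using False unfolding W_def by (simp add: Suc_leI card_gt_0_iff)
      then have lt: "card S < s" using cS UW s2 by simp
      have ge: "1 \<le> card S" using finS Ss by (metis One_nat_def Suc_leI card_gt_0_iff empty_iff)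
      have "Cprop X s" by (rule CpropI[OF g(1) g(2)]) (use ge lt in \<open>simp_all add: S_def\<close>)
      then show ?thesis by blast
    qed
  next
    case T2: False
    then obtain M' where M: "M' \<in> Sset X s" "P1 \<in> M'" "M' \<noteq> Ls 1" unfolding S_def by blast
    have Tset: "{L\<in>S. P1 \<in> L} = {Ls 1, M'}"
    proof
      show "{L\<in>S. P1 \<in> L} \<subseteq> {Ls 1, M'}"
      proof
        fix L assume L: "L \<in> {L\<in>S. P1 \<in> L}"
        show "L \<in> {Ls 1, M'}"
        proof (cases "L = Ls 1")
          case False
          then have "L = M'" using Tstruct[OF c P1 S1 s2 M, of L] L unfolding S_def by blast
          then show ?thesis by simp
        qed simp
      qed
      show "{Ls 1, M'} \<subseteq> {L\<in>S. P1 \<in> L}" using S1 M P1L1 unfolding S_def by auto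
    qed
    have finS: "finite S" using dec Tset finLU by (metis finite.emptyI finite.insertI finite_Un)
    have cS: "card S = 2 + card U"
    proof -
      have "card S = card {L\<in>S. P1 \<in> L} + card (Ls ` U)"
        using card_Un_disjoint[of "{L\<in>S. P1 \<in> L}" "Ls ` U"] dec dj finLU Tset by simp
      then show ?thesis using Tset cLU M(3) by simp
    qed
    have nM: "M' \<notin> Ls ` {1..s}" using notinLs[OF c P1 M(2,3)] .
    show ?thesis
    proof (cases "W = {}")
      case True
      then have "card U = s - 1" using UW by simp
      then have cSs: "card (Sset X s) = s + 1" using cS s2 unfolding S_def by simp
      have UU: "U = {2..s}" using True unfolding W_def U_def by blast
      have "Ls ` {1..s} = insert (Ls 1) (Ls ` {2..s})"
      proof -
        have "{1..s} = insert 1 {2..s}" using s2 by auto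
        then show ?thesis by simp
      qed
      then have SS: "Sset X s = insert M' (Ls ` {1..s})"
        using dec Tset UU unfolding S_def by auto
      have all: "\<forall>i\<in>{1..s}. Ls i \<in> Sset X s" using U_all[OF True] unfolding S_def .
      note A = Astruct[OF c P1 all M SS]
      have "Aprop X s" by (rule ApropI[OF cSs A])
      then show ?thesis by blast
    next
      case False
      have finW: "finite W" unfolding W_def by simp
      define k where "k = Min W"
      have kW: "k \<in> W" and kmin: "\<forall>j\<in>W. k \<le> j" using False finW unfolding k_def by auto
      have k: "k \<in> {2..s}" "Ls k \<notin> S" using kW unfolding W_def U_def by auto
      have ks: "k \<in> {1..s}" using k by auto
      have Sm: "\<forall>m\<in>{1..<k}. Ls m \<in> Sset X s"
      proof
        fix m assume m: "m \<in> {1..<k}"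
        show "Ls m \<in> Sset X s"
        proof (cases "m = 1")
          case True then show ?thesis using S1 by simp
        next
          case False
          then have "m \<in> {2..s}" using m k by auto
          moreover have "m \<notin> W" using kmin m by fastforce
          ultimately show ?thesis unfolding W_def U_def S_def by blast
        qed
      qed
      obtain Xs' where c': "cfg X s Xs' (\<lambda>i. if i \<le> k then Ls (k+1-i) else Ls i)"
        and X1: "Xs' 1 = Xs k - (\<Union>a\<in>{1..<k}. Ls a)"
        using reversal[OF c k(1) Sm] by blast
      define Ls' where "Ls' = (\<lambda>i. if i \<le> k then Ls (k+1-i) else Ls i)"
      obtain d where d: "M' \<inter> Xs k = {d}" "\<forall>a\<in>{1..s}. a \<noteq> k \<longrightarrow> d \<notin> Ls a"
        using MH[OF c M(1) nM ks] by blast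
      have dX1: "d \<in> Xs' 1" unfolding X1 using d k by auto
      have "card (Xs' 1) = 1" using cfg_basic(2)[OF c' s1(1)] .
      then obtain z where "Xs' 1 = {z}" by (auto simp: card_1_singleton_iff)
      then have X1d: "Xs' 1 = {d}" using dX1 by simp
      have lM: "is_line M'" using M unfolding Sset_def by simp
      have c2: "cfg X s Xs' (Ls'(1 := M'))"
        using replace[OF c'[folded Ls'_def] lM] X1d d by blast
      define N where "N = Ls'(1 := M')"
      have N1: "N 1 \<in> Sset X s" unfolding N_def using M by simp
      have TN: "\<forall>L\<in>Sset X s. d \<in> L \<longrightarrow> L = N 1"
      proof (intro ballI impI)
        fix L assume L: "L \<in> Sset X s" and dL: "d \<in> L"
        from CL[OF c L P1] show "L = N 1"
        proof
          assume "\<exists>i\<in>{2..s}. L = Ls i"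
          then obtain i where i: "i \<in> {2..s}" "L = Ls i" by blast
          have "i = k"
          proof (rule ccontr)
            assume "i \<noteq> k"
            then have "d \<notin> Ls i" using d i by auto
            then show False using dL i by simp
          qed
          then show ?thesis using k L i unfolding S_def by simp
        next
          assume "P1 \<in> L"
          then have "L \<in> {Ls 1, M'}" using Tset L unfolding S_def by blast
          moreover have "d \<notin> Ls 1" using d s1 k by auto
          ultimately show ?thesis using dL unfolding N_def by auto
        qed
      qed
      show ?thesis
      proof (cases "W = {k}")
        case True
        then have "card U = s - 2" using UW by simp
        then have cSs: "card (Sset X s) = s" using cS s2 unfolding S_def by simp
        have Nall: "\<forall>i\<in>{1..s}. N i \<in> Sset X s"
        proof
          fix i assume i: "i \<in> {1..s}"
          have i1: "1 \<le> i" using i by simp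
          consider "i = 1" | "2 \<le> i \<and> i \<le> k" | "k < i" using i1 by linarith
          then show "N i \<in> Sset X s"
          proof cases
            case 1 then show ?thesis using N1 by simp
          next
            case 2
            then have "N i = Ls (k+1-i)" "k+1-i \<in> {1..<k}" unfolding N_def Ls'_def by auto
            then show ?thesis using Sm by simp
          next
            case 3
            have Ni: "N i = Ls i" unfolding N_def Ls'_def using k 3 by auto
            have "i \<in> {2..s}" "i \<notin> W" using 3 i k True by auto
            then have "i \<in> U" unfolding W_def by blast
            then show ?thesis using Ni unfolding U_def S_def by simp
          qed
        qed
        note B = Bstruct[OF c2[folded N_def] Nall cSs]
        have "Bprop X s" by (rule BpropI[OF cSs c2[folded N_def] B])
        then show ?thesis by blast
      next
        case False
        then obtain k2 where k2: "k2 \<in> W" "k2 \<noteq> k" using kW by blast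
        then have "k < k2" using kmin by fastforce
        then have "N k2 = Ls k2" unfolding N_def Ls'_def using k by auto
        moreover have "Ls k2 \<notin> Sset X s" "k2 \<in> {2..s}" using k2 unfolding W_def U_def S_def by auto
        ultimately have ex: "\<exists>k\<in>{2..s}. N k \<notin> Sset X s" by (intro bexI[of _ k2]) simp_all
        obtain Xs'' Ls'' where g: "cfg X s Xs'' Ls''" "\<forall>L\<in>Sset X s. \<forall>P\<in>Xs'' 1. P \<notin> L"
          using G[OF c2[folded N_def] X1d N1 TN ex] by blast
        have kk: "{k, k2} \<subseteq> W" using kW k2 by auto
        have "card {k, k2} \<le> card W" using card_mono[OF finW kk] .
        then have "card W \<ge> 2" using k2 by simp
        then have lt: "card S < s" using cS UW s2 by simp
        have ge: "1 \<le> card S" using finS Ss by (metis One_nat_def Suc_leI card_gt_0_iff empty_iff)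
        have "Cprop X s" by (rule CpropI[OF g(1) g(2)]) (use ge lt in \<open>simp_all add: S_def\<close>)
        then show ?thesis by blast
      qed
    qed
  qed
qed

theorem lemma4p1:
  fixes X :: "'k::field ppoint set" and s :: nat
  assumes "alg_closed TYPE('k)"
    and "is_kconfig X (\<lambda>i. i) s"
    and "s \<ge> 2"
  defines "S \<equiv> {L. is_line L \<and> card (X \<inter> L) = s}"
  shows
   "let
      A = (card S = s + 1 \<and> X = {P. \<exists>L\<in>S. \<exists>M\<in>S. L \<noteq> M \<and> P \<in> L \<and> P \<in> M});
      B = (card S = s \<and>
           (\<exists>Xs Ls. defines_kconfig X (\<lambda>i. i) s Xs Ls \<and> Ls ` {1..s} = S \<and>
              (\<forall>i\<in>{1..s}. \<exists>P. X \<inter> Ls i = {Q. \<exists>j\<in>{1..s}. j \<noteq> i \<and> Q \<in> Ls i \<inter> Ls j} \<union> {P} \<and>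
                               (\<forall>j\<in>{1..s}. j \<noteq> i \<longrightarrow> P \<notin> Ls j))));
      C = (\<exists>r. 1 \<le> r \<and> r < s \<and> card S = r \<and>
           (\<exists>Xs Ls. defines_kconfig X (\<lambda>i. i) s Xs Ls \<and> (\<forall>L\<in>S. \<forall>P\<in>Xs 1. P \<notin> L)))
    in (A \<and> \<not> B \<and> \<not> C) \<or> (\<not> A \<and> B \<and> \<not> C) \<or> (\<not> A \<and> \<not> B \<and> C)"
proof -
  obtain Xs Ls where c: "cfg X s Xs Ls" using assms(2) unfolding is_kconfig_def by blast
  have s2: "2 \<le> s" using assms(3) .
  have s1: "1 \<in> {1..s}" using s2 by simp
  obtain P1 where P1: "Xs 1 = {P1}" using cfg_basic(2)[OF c s1] by (auto simp: card_1_singleton_iff)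
  have ABC: "Aprop X s \<or> Bprop X s \<or> Cprop X s"
  proof (cases "\<exists>M\<in>Sset X s. P1 \<in> M")
    case True
    then obtain M where M: "M \<in> Sset X s" "P1 \<in> M" by blast
    have lM: "is_line M" using M unfolding Sset_def by simp
    have c': "cfg X s Xs (Ls(1 := M))" using replace[OF c lM] M P1 by simp
    show ?thesis by (rule mainL1[OF c' P1 _ s2]) (use M in simp)
  next
    case False
    have dec: "Sset X s = {L\<in>Sset X s. P1 \<in> L} \<union> Ls ` {i\<in>{2..s}. Ls i \<in> Sset X s}"
      and cLU: "card (Ls ` {i\<in>{2..s}. Ls i \<in> Sset X s}) = card {i\<in>{2..s}. Ls i \<in> Sset X s}"
      using Sdec[OF c P1] by auto
    have eq: "Sset X s = Ls ` {i\<in>{2..s}. Ls i \<in> Sset X s}" using dec False by auto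
    have "card {i\<in>{2..s}. Ls i \<in> Sset X s} \<le> card {2..s}" by (rule card_mono) auto
    then have lt: "card (Sset X s) < s" using eq cLU s2 by simp
    have F: "finite (Ls ` {i\<in>{2..s}. Ls i \<in> Sset X s})" by simp
    have fin: "finite (Sset X s)" using F eq by metis
    have ge: "1 \<le> card (Sset X s)" using fin Ls_s_in_S[OF c] by (metis One_nat_def Suc_leI card_gt_0_iff empty_iff)
    have "\<forall>L\<in>Sset X s. \<forall>P\<in>Xs 1. P \<notin> L"
    proof (intro ballI)
      fix L P assume L: "L \<in> Sset X s" and P: "P \<in> Xs 1"
      have "P = P1" using P P1 by simp
      then show "P \<notin> L" using False L by blast
    qed
    then have "Cprop X s" by (rule CpropI[OF c _ ge lt])
    then show ?thesis by blast
  qed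
  have ex: "(Aprop X s \<and> \<not> Bprop X s \<and> \<not> Cprop X s) \<or> (\<not> Aprop X s \<and> Bprop X s \<and> \<not> Cprop X s) \<or>
            (\<not> Aprop X s \<and> \<not> Bprop X s \<and> Cprop X s)"
  proof -
    have "Aprop X s \<Longrightarrow> card (Sset X s) = s + 1" unfolding Aprop_def by simp
    moreover have "Bprop X s \<Longrightarrow> card (Sset X s) = s" unfolding Bprop_def by simp
    moreover have "Cprop X s \<Longrightarrow> card (Sset X s) < s" unfolding Cprop_def by auto
    ultimately show ?thesis using ABC by force
  qed
  show ?thesis
    using ex unfolding Let_def Aprop_def Bprop_def Cprop_def Sset_def S_def .
qed

end
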